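(* Let $R$ be a commutative ring and $e\in R$ an idempotent. Then $R$ is locally stable if and only if both $eRe$ and $(1-e)R(1-e)$ are locally stable.
   Context: All rings are commutative with identity ($eRe=eR$ is a ring with identity $e$). A ring $S$ has stable range 1 if whenever $aS+bS=S$ there is $y\in S$ with $a+by$ a unit. $S$ is locally stable if whenever $a,b\in S$ with $aS+bS=S$ there is $y\in S$ such that $S/(a+by)S$ has stable range 1. *)

theory Defs
  imports "HOL-Algebra.Algebra"
begin

definition stable_range_one :: "('a, 'b) ring_scheme \<Rightarrow> bool" where
  "stable_range_one S \<longleftrightarrow>
     (\<forall>a \<in> carrier S. \<forall>b \<in> carrier S.
        PIdl\<^bsub>S\<^esub> a <+>\<^bsub>S\<^esub> PIdl\<^bsub>S\<^esub> b = carrier S \<longrightarrow>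
        (\<exists>y \<in> carrier S. a \<oplus>\<^bsub>S\<^esub> (b \<otimes>\<^bsub>S\<^esub> y) \<in> Units S))"

definition locally_stable :: "('a, 'b) ring_scheme \<Rightarrow> bool" where
  "locally_stable S \<longleftrightarrow>
     (\<forall>a \<in> carrier S. \<forall>b \<in> carrier S.
        PIdl\<^bsub>S\<^esub> a <+>\<^bsub>S\<^esub> PIdl\<^bsub>S\<^esub> b = carrier S \<longrightarrow>
        (\<exists>y \<in> carrier S.
           stable_range_one (S Quot (PIdl\<^bsub>S\<^esub> (a \<oplus>\<^bsub>S\<^esub> (b \<otimes>\<^bsub>S\<^esub> y))))))"

definition corner :: "('a, 'b) ring_scheme \<Rightarrow> 'a \<Rightarrow> ('a, 'b) ring_scheme" where
  "corner R e = R\<lparr>carrier := {e \<otimes>\<^bsub>R\<^esub> x \<otimes>\<^bsub>R\<^esub> e | x. x \<in> carrier R}, one := e\<rparr>"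

end

theory Submission
  imports Defs
begin

definition SR :: "('a, 'b) ring_scheme \<Rightarrow> 'a \<Rightarrow> bool" where
  "SR S c \<longleftrightarrow> (\<forall>a\<in>carrier S. \<forall>b\<in>carrier S.
     (\<exists>s\<in>carrier S. \<exists>t\<in>carrier S. \<exists>k\<in>carrier S. s \<otimes>\<^bsub>S\<^esub> a \<oplus>\<^bsub>S\<^esub> t \<otimes>\<^bsub>S\<^esub> b = \<one>\<^bsub>S\<^esub> \<oplus>\<^bsub>S\<^esub> k \<otimes>\<^bsub>S\<^esub> c) \<longrightarrow>
     (\<exists>y\<in>carrier S. \<exists>u\<in>carrier S. \<exists>k\<in>carrier S. (a \<oplus>\<^bsub>S\<^esub> b \<otimes>\<^bsub>S\<^esub> y) \<otimes>\<^bsub>S\<^esub> u = \<one>\<^bsub>S\<^esub> \<oplus>\<^bsub>S\<^esub> k \<otimes>\<^bsub>S\<^esub> c))"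

context cring
begin

lemma comax_iff:
  assumes "a \<in> carrier R" "b \<in> carrier R"
  shows "(PIdl a <+> PIdl b = carrier R) \<longleftrightarrow> (\<exists>s\<in>carrier R. \<exists>t\<in>carrier R. s \<otimes> a \<oplus> t \<otimes> b = \<one>)"
proof
  assume "PIdl a <+> PIdl b = carrier R"
  then have "\<one> \<in> PIdl a <+> PIdl b" by simp
  then obtain h k where hk: "h \<in> PIdl a" "k \<in> PIdl b" "\<one> = h \<oplus> k"
    unfolding set_add_def' by blast
  then obtain s t where "s \<in> carrier R" "t \<in> carrier R" "h = s \<otimes> a" "k = t \<otimes> b"
    unfolding cgenideal_def by blast
  then show "\<exists>s\<in>carrier R. \<exists>t\<in>carrier R. s \<otimes> a \<oplus> t \<otimes> b = \<one>"
    using hk by metis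
next
  assume "\<exists>s\<in>carrier R. \<exists>t\<in>carrier R. s \<otimes> a \<oplus> t \<otimes> b = \<one>"
  then obtain s t where st: "s \<in> carrier R" "t \<in> carrier R" "s \<otimes> a \<oplus> t \<otimes> b = \<one>" by blast
  have id: "ideal (PIdl a <+> PIdl b) R"
    by (rule add_ideals) (auto intro: cgenideal_ideal assms)
  have "s \<otimes> a \<in> PIdl a" "t \<otimes> b \<in> PIdl b" unfolding cgenideal_def using st by blast+
  then have "\<one> \<in> PIdl a <+> PIdl b"
    unfolding set_add_def' using st(3) by blast
  then show "PIdl a <+> PIdl b = carrier R" using ideal.one_imp_carrier[OF id] by blast
qed

lemma units_iff:
  "x \<in> Units R \<longleftrightarrow> x \<in> carrier R \<and> (\<exists>u\<in>carrier R. x \<otimes> u = \<one>)"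
proof
  assume "x \<in> Units R"
  then show "x \<in> carrier R \<and> (\<exists>u\<in>carrier R. x \<otimes> u = \<one>)"
    unfolding Units_def by blast
next
  assume A: "x \<in> carrier R \<and> (\<exists>u\<in>carrier R. x \<otimes> u = \<one>)"
  then obtain u where u: "u \<in> carrier R" "x \<otimes> u = \<one>" by blast
  have "u \<otimes> x = \<one>" using u A m_comm[of u x] by simp
  then show "x \<in> Units R" unfolding Units_def using u A by blast
qed

end

lemma cring_units_iff:
  "cring S \<Longrightarrow> x \<in> Units S \<longleftrightarrow> x \<in> carrier S \<and> (\<exists>u\<in>carrier S. x \<otimes>\<^bsub>S\<^esub> u = \<one>\<^bsub>S\<^esub>)"
  by (rule cring.units_iff)

lemma cring_comax_iff:
  "cring S \<Longrightarrow> a \<in> carrier S \<Longrightarrow> b \<in> carrier S \<Longrightarrow>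
   (PIdl\<^bsub>S\<^esub> a <+>\<^bsub>S\<^esub> PIdl\<^bsub>S\<^esub> b = carrier S) \<longleftrightarrow> (\<exists>s\<in>carrier S. \<exists>t\<in>carrier S. s \<otimes>\<^bsub>S\<^esub> a \<oplus>\<^bsub>S\<^esub> t \<otimes>\<^bsub>S\<^esub> b = \<one>\<^bsub>S\<^esub>)"
  by (rule cring.comax_iff)

context cring
begin

lemma coset_eq_iff:
  assumes "ideal I R" "x \<in> carrier R" "y \<in> carrier R"
  shows "I +> x = I +> y \<longleftrightarrow> x \<ominus> y \<in> I"
proof -
  interpret ideal I R by fact
  show ?thesis
  proof
    assume "I +> x = I +> y"
    moreover have "x \<in> I +> x" using a_rcos_self assms by blast
    ultimately have "x \<in> I +> y" by simp
    then show "x \<ominus> y \<in> I" using a_rcos_module_minus[OF ring_axioms] assms by blast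
  next
    assume "x \<ominus> y \<in> I"
    then have "x \<in> I +> y" using a_rcos_module_minus[OF ring_axioms] assms by blast
    then show "I +> x = I +> y" using a_repr_independence' assms by blast
  qed
qed

lemma quot_sr:
  assumes I: "ideal I R"
  shows "stable_range_one (R Quot I) \<longleftrightarrow>
    (\<forall>a\<in>carrier R. \<forall>b\<in>carrier R.
      (\<exists>s\<in>carrier R. \<exists>t\<in>carrier R. s \<otimes> a \<oplus> t \<otimes> b \<ominus> \<one> \<in> I) \<longrightarrow>
      (\<exists>y\<in>carrier R. \<exists>u\<in>carrier R. (a \<oplus> b \<otimes> y) \<otimes> u \<ominus> \<one> \<in> I))"
proof -
  interpret ideal I R by fact
  let ?T = "R Quot I"
  let ?h = "(+>) I"
  have cT: "cring ?T" by (rule quotient_is_cring) (rule is_cring)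
  have hom: "?h \<in> ring_hom R ?T" by (rule rcos_ring_hom)
  have carT: "carrier ?T = ?h ` carrier R"
    unfolding FactRing_def A_RCOSETS_def' by auto
  have hadd: "\<And>x y. x \<in> carrier R \<Longrightarrow> y \<in> carrier R \<Longrightarrow> ?h x \<oplus>\<^bsub>?T\<^esub> ?h y = ?h (x \<oplus> y)"
    using ring_hom_add[OF hom] by simp
  have hmul: "\<And>x y. x \<in> carrier R \<Longrightarrow> y \<in> carrier R \<Longrightarrow> ?h x \<otimes>\<^bsub>?T\<^esub> ?h y = ?h (x \<otimes> y)"
    using ring_hom_mult[OF hom] by simp
  have hone: "\<And>x. x \<in> carrier R \<Longrightarrow> ?h x = \<one>\<^bsub>?T\<^esub> \<longleftrightarrow> x \<ominus> \<one> \<in> I"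
    using coset_eq_iff[OF I] by (simp add: FactRing_def)
  have hc: "\<And>x. x \<in> carrier R \<Longrightarrow> ?h x \<in> carrier ?T" using carT by auto
  have hsum: "\<And>s a t b. s \<in> carrier R \<Longrightarrow> a \<in> carrier R \<Longrightarrow> t \<in> carrier R \<Longrightarrow> b \<in> carrier R \<Longrightarrow>
     ?h s \<otimes>\<^bsub>?T\<^esub> ?h a \<oplus>\<^bsub>?T\<^esub> ?h t \<otimes>\<^bsub>?T\<^esub> ?h b = ?h (s \<otimes> a \<oplus> t \<otimes> b)"
    by (simp add: hadd hmul)
  have comT: "\<And>a b. a \<in> carrier R \<Longrightarrow> b \<in> carrier R \<Longrightarrow>
     (PIdl\<^bsub>?T\<^esub> ?h a <+>\<^bsub>?T\<^esub> PIdl\<^bsub>?T\<^esub> ?h b = carrier ?T) \<longleftrightarrow>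
     (\<exists>s\<in>carrier R. \<exists>t\<in>carrier R. s \<otimes> a \<oplus> t \<otimes> b \<ominus> \<one> \<in> I)"
  proof -
    fix a b assume ab: "a \<in> carrier R" "b \<in> carrier R"
    have "(PIdl\<^bsub>?T\<^esub> ?h a <+>\<^bsub>?T\<^esub> PIdl\<^bsub>?T\<^esub> ?h b = carrier ?T) \<longleftrightarrow>
      (\<exists>s\<in>carrier ?T. \<exists>t\<in>carrier ?T. s \<otimes>\<^bsub>?T\<^esub> ?h a \<oplus>\<^bsub>?T\<^esub> t \<otimes>\<^bsub>?T\<^esub> ?h b = \<one>\<^bsub>?T\<^esub>)"
      by (rule cring_comax_iff[OF cT hc[OF ab(1)] hc[OF ab(2)]])
    also have "\<dots> \<longleftrightarrow> (\<exists>s\<in>carrier R. \<exists>t\<in>carrier R. s \<otimes> a \<oplus> t \<otimes> b \<ominus> \<one> \<in> I)"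
    proof
      assume "\<exists>s\<in>carrier ?T. \<exists>t\<in>carrier ?T. s \<otimes>\<^bsub>?T\<^esub> ?h a \<oplus>\<^bsub>?T\<^esub> t \<otimes>\<^bsub>?T\<^esub> ?h b = \<one>\<^bsub>?T\<^esub>"
      then obtain S T where ST: "S \<in> carrier ?T" "T \<in> carrier ?T"
        "S \<otimes>\<^bsub>?T\<^esub> ?h a \<oplus>\<^bsub>?T\<^esub> T \<otimes>\<^bsub>?T\<^esub> ?h b = \<one>\<^bsub>?T\<^esub>" by blast
      obtain s where s: "s \<in> carrier R" "S = ?h s" using ST(1) carT by blast
      obtain t where t: "t \<in> carrier R" "T = ?h t" using ST(2) carT by blast
      have "?h (s \<otimes> a \<oplus> t \<otimes> b) = \<one>\<^bsub>?T\<^esub>"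
        using ST(3) unfolding s(2) t(2) using hsum[OF s(1) ab(1) t(1) ab(2)] by simp
      then have "s \<otimes> a \<oplus> t \<otimes> b \<ominus> \<one> \<in> I" using hone[of "s \<otimes> a \<oplus> t \<otimes> b"] s t ab by simp
      then show "\<exists>s\<in>carrier R. \<exists>t\<in>carrier R. s \<otimes> a \<oplus> t \<otimes> b \<ominus> \<one> \<in> I" using s t by blast
    next
      assume "\<exists>s\<in>carrier R. \<exists>t\<in>carrier R. s \<otimes> a \<oplus> t \<otimes> b \<ominus> \<one> \<in> I"
      then obtain s t where st: "s \<in> carrier R" "t \<in> carrier R" "s \<otimes> a \<oplus> t \<otimes> b \<ominus> \<one> \<in> I" by blast
      have "?h (s \<otimes> a \<oplus> t \<otimes> b) = \<one>\<^bsub>?T\<^esub>" using hone[of "s \<otimes> a \<oplus> t \<otimes> b"] st ab by simp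
      then have "?h s \<otimes>\<^bsub>?T\<^esub> ?h a \<oplus>\<^bsub>?T\<^esub> ?h t \<otimes>\<^bsub>?T\<^esub> ?h b = \<one>\<^bsub>?T\<^esub>"
        using hsum[OF st(1) ab(1) st(2) ab(2)] by simp
      then show "\<exists>s\<in>carrier ?T. \<exists>t\<in>carrier ?T. s \<otimes>\<^bsub>?T\<^esub> ?h a \<oplus>\<^bsub>?T\<^esub> t \<otimes>\<^bsub>?T\<^esub> ?h b = \<one>\<^bsub>?T\<^esub>"
        using hc[OF st(1)] hc[OF st(2)] by blast
    qed
    finally show "?thesis a b" .
  qed
  have unT: "\<And>x. x \<in> carrier R \<Longrightarrow> ?h x \<in> Units ?T \<longleftrightarrow> (\<exists>u\<in>carrier R. x \<otimes> u \<ominus> \<one> \<in> I)"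
  proof -
    fix x assume x: "x \<in> carrier R"
    show "?thesis x"
    proof
      assume "?h x \<in> Units ?T"
      then obtain U where U: "U \<in> carrier ?T" "?h x \<otimes>\<^bsub>?T\<^esub> U = \<one>\<^bsub>?T\<^esub>"
        unfolding cring_units_iff[OF cT] by blast
      obtain u where u: "u \<in> carrier R" "U = ?h u" using U(1) carT by blast
      have "?h (x \<otimes> u) = \<one>\<^bsub>?T\<^esub>" using U(2) hmul[OF x u(1)] u(2) by simp
      then have "x \<otimes> u \<ominus> \<one> \<in> I" using hone[of "x \<otimes> u"] x u by simp
      then show "\<exists>u\<in>carrier R. x \<otimes> u \<ominus> \<one> \<in> I" using u by blast
    next
      assume "\<exists>u\<in>carrier R. x \<otimes> u \<ominus> \<one> \<in> I"
      then obtain u where u: "u \<in> carrier R" "x \<otimes> u \<ominus> \<one> \<in> I" by blast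
      have "?h (x \<otimes> u) = \<one>\<^bsub>?T\<^esub>" using hone[of "x \<otimes> u"] x u by simp
      then have "?h x \<otimes>\<^bsub>?T\<^esub> ?h u = \<one>\<^bsub>?T\<^esub>" using hmul[OF x u(1)] by simp
      then show "?h x \<in> Units ?T" unfolding cring_units_iff[OF cT] using hc[OF x] hc[OF u(1)] by blast
    qed
  qed
  have hay: "\<And>a b y. a \<in> carrier R \<Longrightarrow> b \<in> carrier R \<Longrightarrow> y \<in> carrier R \<Longrightarrow>
     ?h a \<oplus>\<^bsub>?T\<^esub> ?h b \<otimes>\<^bsub>?T\<^esub> ?h y = ?h (a \<oplus> b \<otimes> y)"
    by (simp add: hadd hmul)
  show ?thesis
  proof
    assume H: "stable_range_one ?T"
    show "\<forall>a\<in>carrier R. \<forall>b\<in>carrier R.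
      (\<exists>s\<in>carrier R. \<exists>t\<in>carrier R. s \<otimes> a \<oplus> t \<otimes> b \<ominus> \<one> \<in> I) \<longrightarrow>
      (\<exists>y\<in>carrier R. \<exists>u\<in>carrier R. (a \<oplus> b \<otimes> y) \<otimes> u \<ominus> \<one> \<in> I)"
    proof (intro ballI impI)
      fix a b assume ab: "a \<in> carrier R" "b \<in> carrier R"
        and ex: "\<exists>s\<in>carrier R. \<exists>t\<in>carrier R. s \<otimes> a \<oplus> t \<otimes> b \<ominus> \<one> \<in> I"
      have "PIdl\<^bsub>?T\<^esub> ?h a <+>\<^bsub>?T\<^esub> PIdl\<^bsub>?T\<^esub> ?h b = carrier ?T"
        using comT[OF ab] ex by blast
      note H1 = H[unfolded stable_range_one_def, rule_format, OF hc[OF ab(1)] hc[OF ab(2)] this]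
      then obtain Y where Y: "Y \<in> carrier ?T"
        "?h a \<oplus>\<^bsub>?T\<^esub> ?h b \<otimes>\<^bsub>?T\<^esub> Y \<in> Units ?T"
        by blast
      from Y(1) obtain y where y: "y \<in> carrier R" "Y = ?h y" using carT by (auto elim: imageE)
      have "?h (a \<oplus> b \<otimes> y) \<in> Units ?T" using Y(2) unfolding y(2) hay[OF ab y(1)] .
      moreover have cc: "a \<oplus> b \<otimes> y \<in> carrier R" using ab y(1) by simp
      ultimately have "\<exists>u\<in>carrier R. (a \<oplus> b \<otimes> y) \<otimes> u \<ominus> \<one> \<in> I"
        using unT[OF cc] by blast
      then show "\<exists>y\<in>carrier R. \<exists>u\<in>carrier R. (a \<oplus> b \<otimes> y) \<otimes> u \<ominus> \<one> \<in> I"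
        using y(1) by blast
    qed
  next
    assume H: "\<forall>a\<in>carrier R. \<forall>b\<in>carrier R.
      (\<exists>s\<in>carrier R. \<exists>t\<in>carrier R. s \<otimes> a \<oplus> t \<otimes> b \<ominus> \<one> \<in> I) \<longrightarrow>
      (\<exists>y\<in>carrier R. \<exists>u\<in>carrier R. (a \<oplus> b \<otimes> y) \<otimes> u \<ominus> \<one> \<in> I)"
    show "stable_range_one ?T"
      unfolding stable_range_one_def
    proof (intro ballI impI)
      fix A B assume AB: "A \<in> carrier ?T" "B \<in> carrier ?T"
        and co: "PIdl\<^bsub>?T\<^esub> A <+>\<^bsub>?T\<^esub> PIdl\<^bsub>?T\<^esub> B = carrier ?T"
      from AB obtain a b where ab: "a \<in> carrier R" "b \<in> carrier R" "A = ?h a" "B = ?h b"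
        using carT by (auto elim: imageE)
      have "\<exists>s\<in>carrier R. \<exists>t\<in>carrier R. s \<otimes> a \<oplus> t \<otimes> b \<ominus> \<one> \<in> I"
        using co unfolding ab(3,4) comT[OF ab(1,2)] .
      with H[rule_format, OF ab(1,2)] obtain y u where yu: "y \<in> carrier R" "u \<in> carrier R" "(a \<oplus> b \<otimes> y) \<otimes> u \<ominus> \<one> \<in> I"
        by blast
      have cc: "a \<oplus> b \<otimes> y \<in> carrier R" using ab yu by simp
      have "?h (a \<oplus> b \<otimes> y) \<in> Units ?T" using unT[OF cc] yu by blast
      then have "A \<oplus>\<^bsub>?T\<^esub> B \<otimes>\<^bsub>?T\<^esub> ?h y \<in> Units ?T"
        unfolding ab(3,4) hay[OF ab(1,2) yu(1)] .
      then show "\<exists>y\<in>carrier ?T. A \<oplus>\<^bsub>?T\<^esub> B \<otimes>\<^bsub>?T\<^esub> y \<in> Units ?T"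
        using hc[OF yu(1)] by blast
    qed
  qed
qed

lemma PIdl_minus_one:
  assumes "x \<in> carrier R" "c \<in> carrier R"
  shows "x \<ominus> \<one> \<in> PIdl c \<longleftrightarrow> (\<exists>k\<in>carrier R. x = \<one> \<oplus> k \<otimes> c)"
proof
  assume "x \<ominus> \<one> \<in> PIdl c"
  then obtain k where k: "k \<in> carrier R" "x \<ominus> \<one> = k \<otimes> c" unfolding cgenideal_def by blast
  have "x = \<one> \<oplus> (x \<ominus> \<one>)" using assms by algebra
  also have "\<dots> = \<one> \<oplus> k \<otimes> c" using k(2) by (rule arg_cong)
  finally show "\<exists>k\<in>carrier R. x = \<one> \<oplus> k \<otimes> c" using k(1) by blast
next
  assume "\<exists>k\<in>carrier R. x = \<one> \<oplus> k \<otimes> c"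
  then obtain k where k: "k \<in> carrier R" "x = \<one> \<oplus> k \<otimes> c" by blast
  have "x \<ominus> \<one> = \<one> \<oplus> k \<otimes> c \<ominus> \<one>" using k(2) by (rule arg_cong)
  also have "\<dots> = k \<otimes> c" using k(1) assms by algebra
  finally show "x \<ominus> \<one> \<in> PIdl c" unfolding cgenideal_def using k(1) by blast
qed

lemma quot_PIdl_sr:
  assumes c: "c \<in> carrier R"
  shows "stable_range_one (R Quot PIdl c) \<longleftrightarrow> SR R c"
proof -
  have P: "\<And>x. x \<in> carrier R \<Longrightarrow> x \<ominus> \<one> \<in> PIdl c \<longleftrightarrow> (\<exists>k\<in>carrier R. x = \<one> \<oplus> k \<otimes> c)"
    by (rule PIdl_minus_one[OF _ c])
  show ?thesis
    unfolding quot_sr[OF cgenideal_ideal[OF c]] SR_def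
  proof (intro iffI ballI impI)
    fix a b assume H: "\<forall>a\<in>carrier R. \<forall>b\<in>carrier R.
       (\<exists>s\<in>carrier R. \<exists>t\<in>carrier R. s \<otimes> a \<oplus> t \<otimes> b \<ominus> \<one> \<in> PIdl c) \<longrightarrow>
       (\<exists>y\<in>carrier R. \<exists>u\<in>carrier R. (a \<oplus> b \<otimes> y) \<otimes> u \<ominus> \<one> \<in> PIdl c)"
      and ab: "a \<in> carrier R" "b \<in> carrier R"
      and ex: "\<exists>s\<in>carrier R. \<exists>t\<in>carrier R. \<exists>k\<in>carrier R. s \<otimes> a \<oplus> t \<otimes> b = \<one> \<oplus> k \<otimes> c"
    note H1 = H[rule_format, OF ab]
    from ex obtain s t where st: "s \<in> carrier R" "t \<in> carrier R" "\<exists>k\<in>carrier R. s \<otimes> a \<oplus> t \<otimes> b = \<one> \<oplus> k \<otimes> c"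
      by blast
    have xc: "s \<otimes> a \<oplus> t \<otimes> b \<in> carrier R" using st ab by simp
    have "s \<otimes> a \<oplus> t \<otimes> b \<ominus> \<one> \<in> PIdl c" using iffD2[OF P[OF xc] st(3)] .
    then obtain y u where yu: "y \<in> carrier R" "u \<in> carrier R" "(a \<oplus> b \<otimes> y) \<otimes> u \<ominus> \<one> \<in> PIdl c"
      using H1 st(1,2) by blast
    have yc: "(a \<oplus> b \<otimes> y) \<otimes> u \<in> carrier R" using yu ab by simp
    have "\<exists>k\<in>carrier R. (a \<oplus> b \<otimes> y) \<otimes> u = \<one> \<oplus> k \<otimes> c"
      using iffD1[OF P[OF yc] yu(3)] .
    with yu(1,2) show "\<exists>y\<in>carrier R. \<exists>u\<in>carrier R. \<exists>k\<in>carrier R. (a \<oplus> b \<otimes> y) \<otimes> u = \<one> \<oplus> k \<otimes> c"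
      by blast
  next
    fix a b assume H: "\<forall>a\<in>carrier R. \<forall>b\<in>carrier R.
       (\<exists>s\<in>carrier R. \<exists>t\<in>carrier R. \<exists>k\<in>carrier R. s \<otimes> a \<oplus> t \<otimes> b = \<one> \<oplus> k \<otimes> c) \<longrightarrow>
       (\<exists>y\<in>carrier R. \<exists>u\<in>carrier R. \<exists>k\<in>carrier R. (a \<oplus> b \<otimes> y) \<otimes> u = \<one> \<oplus> k \<otimes> c)"
      and ab: "a \<in> carrier R" "b \<in> carrier R"
      and ex: "\<exists>s\<in>carrier R. \<exists>t\<in>carrier R. s \<otimes> a \<oplus> t \<otimes> b \<ominus> \<one> \<in> PIdl c"
    note H1 = H[rule_format, OF ab]
    from ex obtain s t where st: "s \<in> carrier R" "t \<in> carrier R" "s \<otimes> a \<oplus> t \<otimes> b \<ominus> \<one> \<in> PIdl c"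
      by blast
    have xc: "s \<otimes> a \<oplus> t \<otimes> b \<in> carrier R" using st ab by simp
    have "\<exists>k\<in>carrier R. s \<otimes> a \<oplus> t \<otimes> b = \<one> \<oplus> k \<otimes> c" using iffD1[OF P[OF xc] st(3)] .
    then obtain y u where yu: "y \<in> carrier R" "u \<in> carrier R" "\<exists>k\<in>carrier R. (a \<oplus> b \<otimes> y) \<otimes> u = \<one> \<oplus> k \<otimes> c"
      using H1 st(1,2) by blast
    have yc: "(a \<oplus> b \<otimes> y) \<otimes> u \<in> carrier R" using yu ab by simp
    have "(a \<oplus> b \<otimes> y) \<otimes> u \<ominus> \<one> \<in> PIdl c"
      using iffD2[OF P[OF yc] yu(3)] .
    with yu(1,2) show "\<exists>y\<in>carrier R. \<exists>u\<in>carrier R. (a \<oplus> b \<otimes> y) \<otimes> u \<ominus> \<one> \<in> PIdl c"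
      by blast
  qed
qed

lemma ls_iff:
  "locally_stable R \<longleftrightarrow> (\<forall>a\<in>carrier R. \<forall>b\<in>carrier R.
     (\<exists>s\<in>carrier R. \<exists>t\<in>carrier R. s \<otimes> a \<oplus> t \<otimes> b = \<one>) \<longrightarrow> (\<exists>y\<in>carrier R. SR R (a \<oplus> b \<otimes> y)))"
proof -
  have Q: "\<And>a b y. a \<in> carrier R \<Longrightarrow> b \<in> carrier R \<Longrightarrow> y \<in> carrier R \<Longrightarrow>
    stable_range_one (R Quot PIdl (a \<oplus> b \<otimes> y)) \<longleftrightarrow> SR R (a \<oplus> b \<otimes> y)"
  proof -
    fix a b y assume "a \<in> carrier R" "b \<in> carrier R" "y \<in> carrier R"
    then have "a \<oplus> b \<otimes> y \<in> carrier R" by simp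
    then show "?thesis a b y" by (rule quot_PIdl_sr)
  qed
  show ?thesis
    unfolding locally_stable_def
  proof (intro iffI ballI impI)
    fix a b assume H: "\<forall>a\<in>carrier R. \<forall>b\<in>carrier R. PIdl a <+> PIdl b = carrier R \<longrightarrow>
           (\<exists>y\<in>carrier R. stable_range_one (R Quot PIdl (a \<oplus> b \<otimes> y)))"
      and ab: "a \<in> carrier R" "b \<in> carrier R"
      and ex: "\<exists>s\<in>carrier R. \<exists>t\<in>carrier R. s \<otimes> a \<oplus> t \<otimes> b = \<one>"
    have "PIdl a <+> PIdl b = carrier R" using ex unfolding comax_iff[OF ab] .
    with H[rule_format, OF ab] obtain y where y: "y \<in> carrier R" "stable_range_one (R Quot PIdl (a \<oplus> b \<otimes> y))" by blast
    have "SR R (a \<oplus> b \<otimes> y)" using y(2) unfolding Q[OF ab y(1)] .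
    then show "\<exists>y\<in>carrier R. SR R (a \<oplus> b \<otimes> y)" using y(1) by blast
  next
    fix a b assume H: "\<forall>a\<in>carrier R. \<forall>b\<in>carrier R.
     (\<exists>s\<in>carrier R. \<exists>t\<in>carrier R. s \<otimes> a \<oplus> t \<otimes> b = \<one>) \<longrightarrow> (\<exists>y\<in>carrier R. SR R (a \<oplus> b \<otimes> y))"
      and ab: "a \<in> carrier R" "b \<in> carrier R"
      and co: "PIdl a <+> PIdl b = carrier R"
    have "\<exists>s\<in>carrier R. \<exists>t\<in>carrier R. s \<otimes> a \<oplus> t \<otimes> b = \<one>" using co unfolding comax_iff[OF ab] .
    with H[rule_format, OF ab] obtain y where y: "y \<in> carrier R" "SR R (a \<oplus> b \<otimes> y)" by blast
    have "stable_range_one (R Quot PIdl (a \<oplus> b \<otimes> y))" using y(2) unfolding Q[OF ab y(1)] .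
    then show "\<exists>y\<in>carrier R. stable_range_one (R Quot PIdl (a \<oplus> b \<otimes> y))" using y(1) by blast
  qed
qed


end

definition cor :: "('a, 'b) ring_scheme \<Rightarrow> 'a \<Rightarrow> 'a set" where
  "cor R e = {x \<in> carrier R. e \<otimes>\<^bsub>R\<^esub> x = x}"

lemma corner_mult: "monoid.mult (corner R e) = monoid.mult R" by (simp add: corner_def)
lemma corner_add: "ring.add (corner R e) = ring.add R" by (simp add: corner_def)
lemma corner_zero: "ring.zero (corner R e) = ring.zero R" by (simp add: corner_def)
lemma corner_one: "monoid.one (corner R e) = e" by (simp add: corner_def)
lemma corner_carrier_def: "carrier (corner R e) = {e \<otimes>\<^bsub>R\<^esub> x \<otimes>\<^bsub>R\<^esub> e | x. x \<in> carrier R}"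
  by (simp add: corner_def)

lemma SR_corner:
  "SR (corner R e) c \<longleftrightarrow> (\<forall>a\<in>carrier (corner R e). \<forall>b\<in>carrier (corner R e).
     (\<exists>s\<in>carrier (corner R e). \<exists>t\<in>carrier (corner R e). \<exists>k\<in>carrier (corner R e). s \<otimes>\<^bsub>R\<^esub> a \<oplus>\<^bsub>R\<^esub> t \<otimes>\<^bsub>R\<^esub> b = e \<oplus>\<^bsub>R\<^esub> k \<otimes>\<^bsub>R\<^esub> c) \<longrightarrow>
     (\<exists>y\<in>carrier (corner R e). \<exists>u\<in>carrier (corner R e). \<exists>k\<in>carrier (corner R e). (a \<oplus>\<^bsub>R\<^esub> b \<otimes>\<^bsub>R\<^esub> y) \<otimes>\<^bsub>R\<^esub> u = e \<oplus>\<^bsub>R\<^esub> k \<otimes>\<^bsub>R\<^esub> c))"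
  unfolding SR_def corner_mult corner_add corner_one ..

context cring
begin

lemma corner_carrier:
  assumes e: "e \<in> carrier R" "e \<otimes> e = e"
  shows "carrier (corner R e) = cor R e"
  unfolding corner_carrier_def cor_def
proof (intro equalityI subsetI)
  fix z assume "z \<in> {e \<otimes> x \<otimes> e |x. x \<in> carrier R}"
  then obtain x where x: "x \<in> carrier R" "z = e \<otimes> x \<otimes> e" by blast
  have "e \<otimes> z = e \<otimes> (e \<otimes> (x \<otimes> e))" using x e by (simp add: m_assoc)
  also have "\<dots> = (e \<otimes> e) \<otimes> (x \<otimes> e)" by (rule m_assoc[symmetric]) (use x e in simp_all)
  also have "\<dots> = e \<otimes> (x \<otimes> e)" using e by simp
  also have "\<dots> = z" using x e by (simp add: m_assoc)
  finally show "z \<in> {x \<in> carrier R. e \<otimes> x = x}" using x e by simp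
next
  fix z assume "z \<in> {x \<in> carrier R. e \<otimes> x = x}"
  then have z: "z \<in> carrier R" "e \<otimes> z = z" by auto
  have "e \<otimes> z \<otimes> e = e \<otimes> (e \<otimes> z)" using z e by algebra
  also have "\<dots> = z" using z by simp
  finally show "z \<in> {e \<otimes> x \<otimes> e |x. x \<in> carrier R}" using z by force
qed

lemma cring_corner:
  assumes e: "e \<in> carrier R" "e \<otimes> e = e"
  shows "cring (corner R e)"
proof -
  note C = corner_carrier[OF e] cor_def corner_mult corner_add corner_zero corner_one
  show ?thesis
  proof (rule cringI)
    show "abelian_group (corner R e)"
    proof (rule abelian_groupI)
      fix x y assume "x \<in> carrier (corner R e)" "y \<in> carrier (corner R e)"
      then have xy: "x \<in> carrier R" "e \<otimes> x = x" "y \<in> carrier R" "e \<otimes> y = y" unfolding C by auto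
      have "e \<otimes> (x \<oplus> y) = e \<otimes> x \<oplus> e \<otimes> y" using xy e by (simp add: r_distr)
      then show "x \<oplus>\<^bsub>corner R e\<^esub> y \<in> carrier (corner R e)" unfolding C using xy by simp
      show "x \<oplus>\<^bsub>corner R e\<^esub> y = y \<oplus>\<^bsub>corner R e\<^esub> x" unfolding C using xy by (simp add: a_comm)
    next
      show "\<zero>\<^bsub>corner R e\<^esub> \<in> carrier (corner R e)" unfolding C using e by simp
    next
      fix x y z assume "x \<in> carrier (corner R e)" "y \<in> carrier (corner R e)" "z \<in> carrier (corner R e)"
      then show "x \<oplus>\<^bsub>corner R e\<^esub> y \<oplus>\<^bsub>corner R e\<^esub> z = x \<oplus>\<^bsub>corner R e\<^esub> (y \<oplus>\<^bsub>corner R e\<^esub> z)"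
        unfolding C by (simp add: a_assoc)
    next
      fix x assume "x \<in> carrier (corner R e)"
      then have x: "x \<in> carrier R" "e \<otimes> x = x" unfolding C by auto
      show "\<zero>\<^bsub>corner R e\<^esub> \<oplus>\<^bsub>corner R e\<^esub> x = x" unfolding C using x by simp
      have "e \<otimes> (\<ominus> x) = \<ominus> (e \<otimes> x)" using x e by (simp add: r_minus)
      then have "\<ominus> x \<in> carrier (corner R e)" unfolding C using x by simp
      moreover have "\<ominus> x \<oplus>\<^bsub>corner R e\<^esub> x = \<zero>\<^bsub>corner R e\<^esub>" unfolding C using x by (simp add: l_neg)
      ultimately show "\<exists>y\<in>carrier (corner R e). y \<oplus>\<^bsub>corner R e\<^esub> x = \<zero>\<^bsub>corner R e\<^esub>" by blast
    qed
  next
    show "comm_monoid (corner R e)"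
    proof (rule comm_monoidI)
      fix x y assume "x \<in> carrier (corner R e)" "y \<in> carrier (corner R e)"
      then have xy: "x \<in> carrier R" "e \<otimes> x = x" "y \<in> carrier R" "e \<otimes> y = y" unfolding C by auto
      have "e \<otimes> (x \<otimes> y) = (e \<otimes> x) \<otimes> y" by (rule m_assoc[symmetric]) (use xy e in simp_all)
      then have "e \<otimes> (x \<otimes> y) = x \<otimes> y" using xy by simp
      then show "x \<otimes>\<^bsub>corner R e\<^esub> y \<in> carrier (corner R e)" unfolding C using xy by simp
      show "x \<otimes>\<^bsub>corner R e\<^esub> y = y \<otimes>\<^bsub>corner R e\<^esub> x" unfolding C using xy by (simp add: m_comm)
    next
      show "\<one>\<^bsub>corner R e\<^esub> \<in> carrier (corner R e)" unfolding C using e by simp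
    next
      fix x y z assume "x \<in> carrier (corner R e)" "y \<in> carrier (corner R e)" "z \<in> carrier (corner R e)"
      then show "x \<otimes>\<^bsub>corner R e\<^esub> y \<otimes>\<^bsub>corner R e\<^esub> z = x \<otimes>\<^bsub>corner R e\<^esub> (y \<otimes>\<^bsub>corner R e\<^esub> z)"
        unfolding C by (simp add: m_assoc)
    next
      fix x assume "x \<in> carrier (corner R e)"
      then show "\<one>\<^bsub>corner R e\<^esub> \<otimes>\<^bsub>corner R e\<^esub> x = x" unfolding C by simp
    qed
  next
    fix x y z assume "x \<in> carrier (corner R e)" "y \<in> carrier (corner R e)" "z \<in> carrier (corner R e)"
    then show "(x \<oplus>\<^bsub>corner R e\<^esub> y) \<otimes>\<^bsub>corner R e\<^esub> z = x \<otimes>\<^bsub>corner R e\<^esub> z \<oplus>\<^bsub>corner R e\<^esub> y \<otimes>\<^bsub>corner R e\<^esub> z"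
      unfolding C by (simp add: l_distr)
  qed
qed

end

locale orth_pair = cring +
  fixes e f
  assumes eC: "e \<in> carrier R" and fC: "f \<in> carrier R"
    and ee: "e \<otimes> e = e" and ff: "f \<otimes> f = f" and ef: "e \<otimes> f = \<zero>" and e_f: "e \<oplus> f = \<one>"
begin

lemma fe: "f \<otimes> e = \<zero>" using ef m_comm[OF eC fC] by simp

lemma swap: "orth_pair R f e"
  by unfold_locales (use fC eC ff ee fe e_f a_comm[OF eC fC] in auto)

lemma cor_iff: "x \<in> cor R e \<longleftrightarrow> x \<in> carrier R \<and> e \<otimes> x = x"
  unfolding cor_def by simp

lemma e_assoc: "w \<in> carrier R \<Longrightarrow> e \<otimes> (e \<otimes> w) = e \<otimes> w"
proof -
  assume w: "w \<in> carrier R"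
  have "e \<otimes> (e \<otimes> w) = (e \<otimes> e) \<otimes> w" by (rule m_assoc[symmetric]) (use w eC in simp_all)
  then show ?thesis using ee by simp
qed

lemma e_cor: "w \<in> carrier R \<Longrightarrow> e \<otimes> w \<in> cor R e"
  unfolding cor_iff using e_assoc eC by simp

lemma f_kill: assumes "x \<in> cor R e" shows "f \<otimes> x = \<zero>" "x \<otimes> f = \<zero>"
proof -
  have x: "x \<in> carrier R" "e \<otimes> x = x" using assms cor_iff by auto
  have "f \<otimes> x = f \<otimes> (e \<otimes> x)" using x by simp
  also have "\<dots> = (f \<otimes> e) \<otimes> x" by (rule m_assoc[symmetric]) (use x eC fC in simp_all)
  also have "\<dots> = \<zero>" using fe x by simp
  finally show "f \<otimes> x = \<zero>" .
  then show "x \<otimes> f = \<zero>" using m_comm[OF x(1) fC] by simp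
qed

lemma mul_cor: assumes "x \<in> cor R e" "w \<in> carrier R" shows "w \<otimes> x = (e \<otimes> w) \<otimes> x"
proof -
  have x: "x \<in> carrier R" "e \<otimes> x = x" using assms cor_iff by auto
  have "(e \<otimes> w) \<otimes> x = w \<otimes> (e \<otimes> x)" using x(1) assms(2) eC by algebra
  also have "\<dots> = w \<otimes> x" by (simp only: x(2))
  finally show ?thesis by simp
qed

lemma mul_e: assumes "x \<in> cor R e" "w \<in> carrier R" shows "x \<otimes> (e \<otimes> w) = x \<otimes> w"
proof -
  have x: "x \<in> carrier R" "e \<otimes> x = x" using assms cor_iff by auto
  have "x \<otimes> (e \<otimes> w) = (e \<otimes> x) \<otimes> w" using x(1) assms(2) eC by algebra
  also have "\<dots> = x \<otimes> w" by (simp only: x(2))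
  finally show ?thesis .
qed

lemma emul: assumes "x \<in> carrier R" "y \<in> carrier R" shows "(e \<otimes> x) \<otimes> (e \<otimes> y) = e \<otimes> (x \<otimes> y)"
proof -
  have "(e \<otimes> x) \<otimes> (e \<otimes> y) = (e \<otimes> e) \<otimes> (x \<otimes> y)" using assms eC by algebra
  then show ?thesis using ee by simp
qed

lemma lift:
  assumes "s \<in> cor R e" "a \<in> cor R e" "t \<in> carrier R" "b \<in> carrier R"
  shows "(s \<oplus> f) \<otimes> (a \<oplus> f) \<oplus> t \<otimes> b = (s \<otimes> a \<oplus> t \<otimes> b) \<oplus> f"
proof -
  have sa: "s \<in> carrier R" "a \<in> carrier R" using assms(1,2) cor_iff by auto
  have "(s \<oplus> f) \<otimes> (a \<oplus> f) \<oplus> t \<otimes> b = (s \<otimes> a \<oplus> t \<otimes> b) \<oplus> (s \<otimes> f \<oplus> f \<otimes> a \<oplus> f \<otimes> f)"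
    using sa assms(3,4) fC by algebra
  also have "s \<otimes> f \<oplus> f \<otimes> a \<oplus> f \<otimes> f = f"
    using f_kill[OF assms(1)] f_kill[OF assms(2)] ff fC by simp
  finally show ?thesis .
qed

lemma e_one_plus: "z \<in> carrier R \<Longrightarrow> e \<otimes> (\<one> \<oplus> z) = e \<oplus> e \<otimes> z"
  using eC by algebra


lemma LC_iff:
  "locally_stable (corner R e) \<longleftrightarrow> (\<forall>a\<in>cor R e. \<forall>b\<in>cor R e.
     (\<exists>s\<in>cor R e. \<exists>t\<in>cor R e. s \<otimes> a \<oplus> t \<otimes> b = e) \<longrightarrow>
     (\<exists>y\<in>cor R e. \<forall>a1\<in>cor R e. \<forall>b1\<in>cor R e.
        (\<exists>s\<in>cor R e. \<exists>t\<in>cor R e. \<exists>k\<in>cor R e. s \<otimes> a1 \<oplus> t \<otimes> b1 = e \<oplus> k \<otimes> (a \<oplus> b \<otimes> y)) \<longrightarrow>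
        (\<exists>y'\<in>cor R e. \<exists>u\<in>cor R e. \<exists>k\<in>cor R e. (a1 \<oplus> b1 \<otimes> y') \<otimes> u = e \<oplus> k \<otimes> (a \<oplus> b \<otimes> y))))"
  unfolding cring.ls_iff[OF cring_corner[OF eC ee]] SR_corner corner_mult corner_add corner_one
    corner_carrier[OF eC ee] ..

lemma ls_corner:
  assumes LS: "locally_stable R"
  shows "locally_stable (corner R e)"
  unfolding LC_iff
proof (intro ballI impI)
  fix a b assume a: "a \<in> cor R e" and b: "b \<in> cor R e"
    and ex: "\<exists>s\<in>cor R e. \<exists>t\<in>cor R e. s \<otimes> a \<oplus> t \<otimes> b = e"
  obtain s t where s: "s \<in> cor R e" and t: "t \<in> cor R e" and st: "s \<otimes> a \<oplus> t \<otimes> b = e"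
    using ex by blast
  have aC: "a \<in> carrier R" and bC: "b \<in> carrier R" and sC: "s \<in> carrier R" and tC: "t \<in> carrier R"
    using a b s t cor_iff by auto
  have one: "(s \<oplus> f) \<otimes> (a \<oplus> f) \<oplus> t \<otimes> b = \<one>" using lift[OF s a tC bC] st e_f by simp
  have sfC: "s \<oplus> f \<in> carrier R" and afC: "a \<oplus> f \<in> carrier R" using sC aC fC by auto
  have pre: "\<exists>s\<in>carrier R. \<exists>t\<in>carrier R. s \<otimes> (a \<oplus> f) \<oplus> t \<otimes> b = \<one>"
    using one sfC tC by blast
  obtain y where y: "y \<in> carrier R" and SRy: "SR R ((a \<oplus> f) \<oplus> b \<otimes> y)"
    using LS[unfolded ls_iff, rule_format, OF afC bC pre] by blast
  define Y where "Y = e \<otimes> y"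
  have Y: "Y \<in> cor R e" unfolding Y_def using e_cor y by simp
  have YC: "Y \<in> carrier R" using Y cor_iff by auto
  have bY: "b \<otimes> Y = b \<otimes> y" unfolding Y_def using mul_e[OF b y] .
  define c where "c = a \<oplus> b \<otimes> Y"
  have cC: "c \<in> carrier R" unfolding c_def using aC bC YC by simp
  have cc: "(a \<oplus> f) \<oplus> b \<otimes> y = c \<oplus> f"
  proof -
    have "(a \<oplus> f) \<oplus> b \<otimes> y = (a \<oplus> b \<otimes> y) \<oplus> f" using aC bC fC y by algebra
    then show ?thesis unfolding c_def bY .
  qed
  show "\<exists>y\<in>cor R e. \<forall>a1\<in>cor R e. \<forall>b1\<in>cor R e.
        (\<exists>s\<in>cor R e. \<exists>t\<in>cor R e. \<exists>k\<in>cor R e. s \<otimes> a1 \<oplus> t \<otimes> b1 = e \<oplus> k \<otimes> (a \<oplus> b \<otimes> y)) \<longrightarrow>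
        (\<exists>y'\<in>cor R e. \<exists>u\<in>cor R e. \<exists>k\<in>cor R e. (a1 \<oplus> b1 \<otimes> y') \<otimes> u = e \<oplus> k \<otimes> (a \<oplus> b \<otimes> y))"
  proof (rule bexI[OF _ Y], intro ballI impI)
    fix a1 b1 assume a1: "a1 \<in> cor R e" and b1: "b1 \<in> cor R e"
      and ex1: "\<exists>s\<in>cor R e. \<exists>t\<in>cor R e. \<exists>k\<in>cor R e. s \<otimes> a1 \<oplus> t \<otimes> b1 = e \<oplus> k \<otimes> (a \<oplus> b \<otimes> Y)"
    obtain s1 t1 k1 where s1: "s1 \<in> cor R e" and t1: "t1 \<in> cor R e" and k1: "k1 \<in> cor R e"
      and eq1: "s1 \<otimes> a1 \<oplus> t1 \<otimes> b1 = e \<oplus> k1 \<otimes> (a \<oplus> b \<otimes> Y)"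
      using ex1 by blast
    have a1C: "a1 \<in> carrier R" and b1C: "b1 \<in> carrier R" and s1C: "s1 \<in> carrier R"
      and t1C: "t1 \<in> carrier R" and k1C: "k1 \<in> carrier R"
      using a1 b1 s1 t1 k1 cor_iff by auto
    have a1e: "e \<otimes> a1 = a1" and b1e: "e \<otimes> b1 = b1" using a1 b1 cor_iff by auto
    have k1f: "k1 \<otimes> f = \<zero>" using f_kill(2)[OF k1] .
    have "\<one> \<oplus> k1 \<otimes> ((a \<oplus> f) \<oplus> b \<otimes> y) = (e \<oplus> f) \<oplus> k1 \<otimes> (c \<oplus> f)"
      unfolding cc e_f ..
    also have "\<dots> = (e \<oplus> k1 \<otimes> c) \<oplus> f \<oplus> k1 \<otimes> f" using eC fC k1C cC by algebra
    also have "\<dots> = (e \<oplus> k1 \<otimes> c) \<oplus> f" using k1f eC fC k1C cC by simp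
    also have "\<dots> = (s1 \<otimes> a1 \<oplus> t1 \<otimes> b1) \<oplus> f" by (simp only: eq1 c_def)
    also have "\<dots> = (s1 \<oplus> f) \<otimes> (a1 \<oplus> f) \<oplus> t1 \<otimes> b1" using lift[OF s1 a1 t1C b1C] by simp
    finally have pre1: "(s1 \<oplus> f) \<otimes> (a1 \<oplus> f) \<oplus> t1 \<otimes> b1 = \<one> \<oplus> k1 \<otimes> ((a \<oplus> f) \<oplus> b \<otimes> y)" by simp
    have s1fC: "s1 \<oplus> f \<in> carrier R" and a1fC: "a1 \<oplus> f \<in> carrier R" using s1C a1C fC by auto
    have pre2: "\<exists>s\<in>carrier R. \<exists>t\<in>carrier R. \<exists>k\<in>carrier R.
        s \<otimes> (a1 \<oplus> f) \<oplus> t \<otimes> b1 = \<one> \<oplus> k \<otimes> ((a \<oplus> f) \<oplus> b \<otimes> y)"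
      using pre1 s1fC t1C k1C by blast
    obtain y2 u k2 where y2: "y2 \<in> carrier R" and u: "u \<in> carrier R" and k2: "k2 \<in> carrier R"
      and eq2: "((a1 \<oplus> f) \<oplus> b1 \<otimes> y2) \<otimes> u = \<one> \<oplus> k2 \<otimes> ((a \<oplus> f) \<oplus> b \<otimes> y)"
      using SRy[unfolded SR_def, rule_format, OF a1fC b1C pre2] by blast
    define Xv where "Xv = a1 \<oplus> b1 \<otimes> y2"
    have XvC: "Xv \<in> carrier R" unfolding Xv_def using a1C b1C y2 by simp
    have eXv: "e \<otimes> Xv = Xv"
    proof -
      have "e \<otimes> Xv = e \<otimes> a1 \<oplus> (e \<otimes> b1) \<otimes> y2" unfolding Xv_def using eC a1C b1C y2 by algebra
      also have "\<dots> = Xv" unfolding Xv_def by (simp only: a1e b1e)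
      finally show ?thesis .
    qed
    have L: "e \<otimes> (((a1 \<oplus> f) \<oplus> b1 \<otimes> y2) \<otimes> u) = Xv \<otimes> u"
    proof -
      have "e \<otimes> (((a1 \<oplus> f) \<oplus> b1 \<otimes> y2) \<otimes> u) = (e \<otimes> Xv \<oplus> e \<otimes> f) \<otimes> u"
        unfolding Xv_def using eC fC a1C b1C y2 u by algebra
      also have "\<dots> = Xv \<otimes> u" using eXv ef XvC u by simp
      finally show ?thesis .
    qed
    have Rr: "e \<otimes> (\<one> \<oplus> k2 \<otimes> ((a \<oplus> f) \<oplus> b \<otimes> y)) = e \<oplus> (e \<otimes> k2) \<otimes> c"
    proof -
      have "e \<otimes> (\<one> \<oplus> k2 \<otimes> ((a \<oplus> f) \<oplus> b \<otimes> y)) = e \<otimes> (\<one> \<oplus> k2 \<otimes> (c \<oplus> f))" unfolding cc ..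
      also have "\<dots> = e \<oplus> (e \<otimes> k2) \<otimes> c \<oplus> k2 \<otimes> (e \<otimes> f)" using eC fC k2 cC by algebra
      also have "\<dots> = e \<oplus> (e \<otimes> k2) \<otimes> c" using ef eC k2 cC by simp
      finally show ?thesis .
    qed
    have "(a1 \<oplus> b1 \<otimes> (e \<otimes> y2)) \<otimes> (e \<otimes> u) = Xv \<otimes> (e \<otimes> u)"
      unfolding Xv_def mul_e[OF b1 y2] ..
    also have "\<dots> = (e \<otimes> Xv) \<otimes> u" using XvC eC u by algebra
    also have "\<dots> = Xv \<otimes> u" unfolding eXv ..
    also have "\<dots> = e \<otimes> (((a1 \<oplus> f) \<oplus> b1 \<otimes> y2) \<otimes> u)" using L by simp
    also have "\<dots> = e \<oplus> (e \<otimes> k2) \<otimes> c" unfolding eq2 Rr ..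
    finally have fin: "(a1 \<oplus> b1 \<otimes> (e \<otimes> y2)) \<otimes> (e \<otimes> u) = e \<oplus> (e \<otimes> k2) \<otimes> (a \<oplus> b \<otimes> Y)"
      unfolding c_def .
    show "\<exists>y'\<in>cor R e. \<exists>u\<in>cor R e. \<exists>k\<in>cor R e. (a1 \<oplus> b1 \<otimes> y') \<otimes> u = e \<oplus> k \<otimes> (a \<oplus> b \<otimes> Y)"
      using fin e_cor[OF y2] e_cor[OF u] e_cor[OF k2] by blast
  qed
qed


lemma ls_of_corners:
  assumes LE: "locally_stable (corner R e)" and LF: "locally_stable (corner R f)"
  shows "locally_stable R"
proof -
  interpret F: orth_pair R f e by (rule swap)
  show ?thesis
    unfolding ls_iff
  proof (intro ballI impI)
    fix a b assume aC: "a \<in> carrier R" and bC: "b \<in> carrier R"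
      and ex: "\<exists>s\<in>carrier R. \<exists>t\<in>carrier R. s \<otimes> a \<oplus> t \<otimes> b = \<one>"
    obtain s t where sC: "s \<in> carrier R" and tC: "t \<in> carrier R" and st: "s \<otimes> a \<oplus> t \<otimes> b = \<one>"
      using ex by blast
    have "(e \<otimes> s) \<otimes> (e \<otimes> a) \<oplus> (e \<otimes> t) \<otimes> (e \<otimes> b) = e \<otimes> (s \<otimes> a) \<oplus> e \<otimes> (t \<otimes> b)"
      unfolding emul[OF sC aC] emul[OF tC bC] ..
    also have "\<dots> = e \<otimes> (s \<otimes> a \<oplus> t \<otimes> b)" using eC sC aC tC bC by algebra
    also have "\<dots> = e" unfolding st using eC by simp
    finally have preE: "\<exists>s'\<in>cor R e. \<exists>t'\<in>cor R e. s' \<otimes> (e \<otimes> a) \<oplus> t' \<otimes> (e \<otimes> b) = e"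
      using e_cor[OF sC] e_cor[OF tC] by blast
    have "(f \<otimes> s) \<otimes> (f \<otimes> a) \<oplus> (f \<otimes> t) \<otimes> (f \<otimes> b) = f \<otimes> (s \<otimes> a) \<oplus> f \<otimes> (t \<otimes> b)"
      unfolding F.emul[OF sC aC] F.emul[OF tC bC] ..
    also have "\<dots> = f \<otimes> (s \<otimes> a \<oplus> t \<otimes> b)" using fC sC aC tC bC by algebra
    also have "\<dots> = f" unfolding st using fC by simp
    finally have preF: "\<exists>s'\<in>cor R f. \<exists>t'\<in>cor R f. s' \<otimes> (f \<otimes> a) \<oplus> t' \<otimes> (f \<otimes> b) = f"
      using F.e_cor[OF sC] F.e_cor[OF tC] by blast
    obtain y1 where y1: "y1 \<in> cor R e" and P1: "\<forall>a1\<in>cor R e. \<forall>b1\<in>cor R e.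
        (\<exists>s\<in>cor R e. \<exists>t\<in>cor R e. \<exists>k\<in>cor R e. s \<otimes> a1 \<oplus> t \<otimes> b1 = e \<oplus> k \<otimes> (e \<otimes> a \<oplus> e \<otimes> b \<otimes> y1)) \<longrightarrow>
        (\<exists>y'\<in>cor R e. \<exists>u\<in>cor R e. \<exists>k\<in>cor R e. (a1 \<oplus> b1 \<otimes> y') \<otimes> u = e \<oplus> k \<otimes> (e \<otimes> a \<oplus> e \<otimes> b \<otimes> y1))"
      using LE[unfolded LC_iff, rule_format, OF e_cor[OF aC] e_cor[OF bC] preE] by blast
    obtain y2 where y2: "y2 \<in> cor R f" and P2: "\<forall>a1\<in>cor R f. \<forall>b1\<in>cor R f.
        (\<exists>s\<in>cor R f. \<exists>t\<in>cor R f. \<exists>k\<in>cor R f. s \<otimes> a1 \<oplus> t \<otimes> b1 = f \<oplus> k \<otimes> (f \<otimes> a \<oplus> f \<otimes> b \<otimes> y2)) \<longrightarrow>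
        (\<exists>y'\<in>cor R f. \<exists>u\<in>cor R f. \<exists>k\<in>cor R f. (a1 \<oplus> b1 \<otimes> y') \<otimes> u = f \<oplus> k \<otimes> (f \<otimes> a \<oplus> f \<otimes> b \<otimes> y2))"
      using LF[unfolded F.LC_iff, rule_format, OF F.e_cor[OF aC] F.e_cor[OF bC] preF] by blast
    have y1C: "y1 \<in> carrier R" and y2C: "y2 \<in> carrier R" using y1 y2 cor_iff F.cor_iff by auto
    define Y where "Y = y1 \<oplus> y2"
    have YC: "Y \<in> carrier R" unfolding Y_def using y1C y2C by simp
    define c where "c = a \<oplus> b \<otimes> Y"
    have cC: "c \<in> carrier R" unfolding c_def using aC bC YC by simp
    have ec: "e \<otimes> c = e \<otimes> a \<oplus> e \<otimes> b \<otimes> y1"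
    proof -
      have "e \<otimes> c = e \<otimes> a \<oplus> e \<otimes> b \<otimes> y1 \<oplus> b \<otimes> (e \<otimes> y2)"
        unfolding c_def Y_def using eC aC bC y1C y2C by algebra
      also have "\<dots> = e \<otimes> a \<oplus> e \<otimes> b \<otimes> y1" using F.f_kill(1)[OF y2] eC aC bC y1C by simp
      finally show ?thesis .
    qed
    have fc: "f \<otimes> c = f \<otimes> a \<oplus> f \<otimes> b \<otimes> y2"
    proof -
      have "f \<otimes> c = f \<otimes> a \<oplus> f \<otimes> b \<otimes> y2 \<oplus> b \<otimes> (f \<otimes> y1)"
        unfolding c_def Y_def using fC aC bC y1C y2C by algebra
      also have "\<dots> = f \<otimes> a \<oplus> f \<otimes> b \<otimes> y2" using f_kill(1)[OF y1] fC aC bC y2C by simp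
      finally show ?thesis .
    qed
    show "\<exists>y\<in>carrier R. SR R (a \<oplus> b \<otimes> y)"
    proof (rule bexI[OF _ YC], unfold SR_def, fold c_def, intro ballI impI)
      fix a1 b1 assume a1C: "a1 \<in> carrier R" and b1C: "b1 \<in> carrier R"
        and ex1: "\<exists>s\<in>carrier R. \<exists>t\<in>carrier R. \<exists>k\<in>carrier R. s \<otimes> a1 \<oplus> t \<otimes> b1 = \<one> \<oplus> k \<otimes> c"
      obtain s1 t1 k1 where s1C: "s1 \<in> carrier R" and t1C: "t1 \<in> carrier R" and k1C: "k1 \<in> carrier R"
        and eq1: "s1 \<otimes> a1 \<oplus> t1 \<otimes> b1 = \<one> \<oplus> k1 \<otimes> c" using ex1 by blast
      have "(e \<otimes> s1) \<otimes> (e \<otimes> a1) \<oplus> (e \<otimes> t1) \<otimes> (e \<otimes> b1) = e \<otimes> (s1 \<otimes> a1) \<oplus> e \<otimes> (t1 \<otimes> b1)"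
        unfolding emul[OF s1C a1C] emul[OF t1C b1C] ..
      also have "\<dots> = e \<otimes> (s1 \<otimes> a1 \<oplus> t1 \<otimes> b1)" using eC s1C a1C t1C b1C by algebra
      also have "\<dots> = e \<otimes> (\<one> \<oplus> k1 \<otimes> c)" unfolding eq1 ..
      also have "\<dots> = e \<oplus> (e \<otimes> k1) \<otimes> (e \<otimes> c)" unfolding emul[OF k1C cC] using eC k1C cC by algebra
      finally have "\<exists>s\<in>cor R e. \<exists>t\<in>cor R e. \<exists>k\<in>cor R e. s \<otimes> (e \<otimes> a1) \<oplus> t \<otimes> (e \<otimes> b1) = e \<oplus> k \<otimes> (e \<otimes> a \<oplus> e \<otimes> b \<otimes> y1)"
        unfolding ec using e_cor[OF s1C] e_cor[OF t1C] e_cor[OF k1C] by blast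
      then obtain y' u' k' where y': "y' \<in> cor R e" and u': "u' \<in> cor R e" and k': "k' \<in> cor R e"
        and q1: "(e \<otimes> a1 \<oplus> e \<otimes> b1 \<otimes> y') \<otimes> u' = e \<oplus> k' \<otimes> (e \<otimes> a \<oplus> e \<otimes> b \<otimes> y1)"
        using P1[rule_format, OF e_cor[OF a1C] e_cor[OF b1C]] by blast
      have "(f \<otimes> s1) \<otimes> (f \<otimes> a1) \<oplus> (f \<otimes> t1) \<otimes> (f \<otimes> b1) = f \<otimes> (s1 \<otimes> a1) \<oplus> f \<otimes> (t1 \<otimes> b1)"
        unfolding F.emul[OF s1C a1C] F.emul[OF t1C b1C] ..
      also have "\<dots> = f \<otimes> (s1 \<otimes> a1 \<oplus> t1 \<otimes> b1)" using fC s1C a1C t1C b1C by algebra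
      also have "\<dots> = f \<otimes> (\<one> \<oplus> k1 \<otimes> c)" unfolding eq1 ..
      also have "\<dots> = f \<oplus> (f \<otimes> k1) \<otimes> (f \<otimes> c)" unfolding F.emul[OF k1C cC] using fC k1C cC by algebra
      finally have "\<exists>s\<in>cor R f. \<exists>t\<in>cor R f. \<exists>k\<in>cor R f. s \<otimes> (f \<otimes> a1) \<oplus> t \<otimes> (f \<otimes> b1) = f \<oplus> k \<otimes> (f \<otimes> a \<oplus> f \<otimes> b \<otimes> y2)"
        unfolding fc using F.e_cor[OF s1C] F.e_cor[OF t1C] F.e_cor[OF k1C] by blast
      then obtain y'' u'' k'' where y'': "y'' \<in> cor R f" and u'': "u'' \<in> cor R f" and k'': "k'' \<in> cor R f"
        and q2: "(f \<otimes> a1 \<oplus> f \<otimes> b1 \<otimes> y'') \<otimes> u'' = f \<oplus> k'' \<otimes> (f \<otimes> a \<oplus> f \<otimes> b \<otimes> y2)"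
        using P2[rule_format, OF F.e_cor[OF a1C] F.e_cor[OF b1C]] by blast
      have y'C: "y' \<in> carrier R" and u'C: "u' \<in> carrier R" and k'C: "k' \<in> carrier R"
        and y''C: "y'' \<in> carrier R" and u''C: "u'' \<in> carrier R" and k''C: "k'' \<in> carrier R"
        using y' u' k' y'' u'' k'' cor_iff F.cor_iff by auto
      define P where "P = a1 \<oplus> b1 \<otimes> (y' \<oplus> y'')"
      have PC: "P \<in> carrier R" unfolding P_def using a1C b1C y'C y''C by simp
      have eP: "e \<otimes> P = e \<otimes> a1 \<oplus> e \<otimes> b1 \<otimes> y'"
      proof -
        have "e \<otimes> P = e \<otimes> a1 \<oplus> e \<otimes> b1 \<otimes> y' \<oplus> b1 \<otimes> (e \<otimes> y'')"
          unfolding P_def using eC a1C b1C y'C y''C by algebra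
        also have "\<dots> = e \<otimes> a1 \<oplus> e \<otimes> b1 \<otimes> y'" using F.f_kill(1)[OF y''] eC a1C b1C y'C by simp
        finally show ?thesis .
      qed
      have fP: "f \<otimes> P = f \<otimes> a1 \<oplus> f \<otimes> b1 \<otimes> y''"
      proof -
        have "f \<otimes> P = f \<otimes> a1 \<oplus> f \<otimes> b1 \<otimes> y'' \<oplus> b1 \<otimes> (f \<otimes> y')"
          unfolding P_def using fC a1C b1C y'C y''C by algebra
        also have "\<dots> = f \<otimes> a1 \<oplus> f \<otimes> b1 \<otimes> y''" using f_kill(1)[OF y'] fC a1C b1C y''C by simp
        finally show ?thesis .
      qed
      have "P \<otimes> (u' \<oplus> u'') = P \<otimes> u' \<oplus> P \<otimes> u''" using PC u'C u''C by algebra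
      also have "\<dots> = (e \<otimes> P) \<otimes> u' \<oplus> (f \<otimes> P) \<otimes> u''"
        unfolding mul_cor[OF u' PC, symmetric] F.mul_cor[OF u'' PC, symmetric] ..
      also have "\<dots> = (e \<oplus> k' \<otimes> (e \<otimes> c)) \<oplus> (f \<oplus> k'' \<otimes> (f \<otimes> c))"
        unfolding eP fP q1 q2 ec fc ..
      also have "\<dots> = (e \<oplus> f) \<oplus> (k' \<otimes> (e \<otimes> c) \<oplus> k'' \<otimes> (f \<otimes> c))"
        using eC fC k'C k''C cC by algebra
      also have "\<dots> = \<one> \<oplus> (k' \<otimes> c \<oplus> k'' \<otimes> c)"
        unfolding e_f mul_e[OF k' cC] F.mul_e[OF k'' cC] ..
      also have "\<dots> = \<one> \<oplus> (k' \<oplus> k'') \<otimes> c" using k'C k''C cC by algebra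
      finally have fin: "(a1 \<oplus> b1 \<otimes> (y' \<oplus> y'')) \<otimes> (u' \<oplus> u'') = \<one> \<oplus> (k' \<oplus> k'') \<otimes> c"
        unfolding P_def .
      have "y' \<oplus> y'' \<in> carrier R" "u' \<oplus> u'' \<in> carrier R" "k' \<oplus> k'' \<in> carrier R"
        using y'C y''C u'C u''C k'C k''C by auto
      then show "\<exists>y\<in>carrier R. \<exists>u\<in>carrier R. \<exists>k\<in>carrier R. (a1 \<oplus> b1 \<otimes> y) \<otimes> u = \<one> \<oplus> k \<otimes> c"
        using fin by blast
    qed
  qed
qed

end


theorem corollary2p8:
  fixes R (structure) and e :: 'a
  assumes "cring R"
    and "e \<in> carrier R"
    and "e \<otimes> e = e"
  shows "locally_stable R \<longleftrightarrow>
           locally_stable (corner R e) \<and> locally_stable (corner R (\<one> \<ominus> e))"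
proof -
  interpret cring R by fact
  note eC = assms(2) and ee = assms(3)
  have fC: "\<one> \<ominus> e \<in> carrier R" using eC by simp
  have ef: "e \<otimes> (\<one> \<ominus> e) = \<zero>"
  proof -
    have "e \<otimes> (\<one> \<ominus> e) = e \<ominus> e \<otimes> e" using eC by algebra
    also have "\<dots> = e \<ominus> e" by (simp only: ee)
    also have "\<dots> = \<zero>" using eC by algebra
    finally show ?thesis .
  qed
  have ff: "(\<one> \<ominus> e) \<otimes> (\<one> \<ominus> e) = \<one> \<ominus> e"
  proof -
    have "(\<one> \<ominus> e) \<otimes> (\<one> \<ominus> e) = (\<one> \<ominus> e) \<ominus> e \<otimes> (\<one> \<ominus> e)" using eC by algebra
    also have "\<dots> = (\<one> \<ominus> e) \<ominus> \<zero>" by (simp only: ef)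
    also have "\<dots> = \<one> \<ominus> e" using eC by algebra
    finally show ?thesis .
  qed
  have e_f: "e \<oplus> (\<one> \<ominus> e) = \<one>" using eC by algebra
  interpret P: orth_pair R e "\<one> \<ominus> e"
    by unfold_locales (rule eC, rule fC, rule ee, rule ff, rule ef, rule e_f)
  interpret Q: orth_pair R "\<one> \<ominus> e" e by (rule P.swap)
  show ?thesis
    using P.ls_corner Q.ls_corner P.ls_of_corners by blast
qed

end
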